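(* Let $k_1, k_2 > 0$ and define $L:\mathbb{R}\to\mathbb{R}$ by $L(z) = k_1 z$ for $z \geq 0$ and $L(z) = -k_2 z$ for $z < 0$. Let $Z$ be a real random variable with probability density function $f$ such that $f(x) = f(-x)$ for all $x \in \mathbb{R}$, $f(x) \geq f(y)$ whenever $0 \leq x \leq y$, and $\mathbb{E}[Z^2] < \infty$. Let $C$ be a minimizer of $c \mapsto \mathbb{E}[L(Z+c)]$ over $c \in \mathbb{R}$. Then $$\mathrm{Var}[L(Z+C)] \leq \mathrm{Var}[L(Z)],$$ and equality holds only when $C = 0$, which happens exactly when $k_1 = k_2$.
   Context: $Z$ models a forecast error $\hat y - y$; $L$ is an asymmetric piecewise-linear loss. $\mathbb{E}$ and $\mathrm{Var}$ denote expectation and variance. *)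

theory Defs
  imports "HOL-Probability.Probability"
begin

definition lossL :: "real \<Rightarrow> real \<Rightarrow> real \<Rightarrow> real" where
  "lossL k1 k2 z = (if z \<ge> 0 then k1 * z else - k2 * z)"

end

theory Submission
  imports Defs
begin

lemma abs_le_sq: "\<bar>x::real\<bar> \<le> 1 + x\<^sup>2"
proof (cases "\<bar>x\<bar> \<le> 1")
  case False
  then have "\<bar>x\<bar> * 1 \<le> \<bar>x\<bar> * \<bar>x\<bar>" by (intro mult_left_mono) auto
  then show ?thesis by (simp add: power2_eq_square)
qed (use zero_le_power2[of x] in linarith)

lemma tri_int: fixes a b :: real shows "a \<le> b \<Longrightarrow> (\<integral>x. (x - a) * indicator {a..b} x \<partial>lborel) = (b - a)\<^sup>2 / 2"
proof -
  assume ab: "a \<le> b"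
  have "(\<integral>x. indicator {a..b} x *\<^sub>R (x - a) \<partial>lborel) = (b - a)\<^sup>2 / 2 - (a - a)\<^sup>2 / 2"
    by (rule integral_FTC_atLeastAtMost[OF ab])
       (auto intro!: derivative_eq_intros continuous_intros simp: has_real_derivative_iff_has_vector_derivative[symmetric])
  then show ?thesis by (simp add: mult.commute)
qed

lemma tri_integrable: fixes a b :: real shows "integrable lborel (\<lambda>x. (x - a) * indicator {a..b} x :: real)"
  by (rule borel_integrable_atLeastAtMost) (auto intro: continuous_intros)

lemma pwA: "\<bar>max 0 (t + h - x) - max 0 (t - x) - h * indicator {..t} x\<bar> \<le> \<bar>h\<bar> * indicator {t - \<bar>h\<bar>..t + \<bar>h\<bar>} (x::real)"
  by (auto simp: indicator_def abs_if max_def)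

lemma pwB: "\<bar>(max 0 (a + h))\<^sup>2 - (max 0 a)\<^sup>2 - 2 * h * max 0 a\<bar> \<le> (h::real)\<^sup>2"
proof (cases "a \<ge> 0")
  case True
  show ?thesis
  proof (cases "a + h \<ge> 0")
    case True
    then show ?thesis using \<open>a \<ge> 0\<close> by (simp add: power2_eq_square algebra_simps)
  next
    case False
    have e: "- a\<^sup>2 - 2 * h * a = h\<^sup>2 - (a + h)\<^sup>2" by (simp add: power2_eq_square algebra_simps)
    have "\<bar>a + h\<bar> \<le> \<bar>h\<bar>" using False \<open>a \<ge> 0\<close> by simp
    then have "(a + h)\<^sup>2 \<le> h\<^sup>2" by (simp add: abs_le_square_iff)
    then have "\<bar>- a\<^sup>2 - 2 * h * a\<bar> \<le> h\<^sup>2" unfolding e by simp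
    then show ?thesis using False \<open>a \<ge> 0\<close> by (simp add: max_def)
  qed
next
  case False
  show ?thesis
  proof (cases "a + h \<ge> 0")
    case True
    have "(a + h)\<^sup>2 \<le> h\<^sup>2" using True False
      by (intro power_mono) auto
    then show ?thesis using True False by (simp add: max_def)
  next
    case False
    then show ?thesis using \<open>\<not> a \<ge> 0\<close> by (simp add: max_def)
  qed
qed

lemma pwB': "\<bar>(max 0 (t + h - x))\<^sup>2 - (max 0 (t - x))\<^sup>2 - 2 * h * max 0 (t - x)\<bar> \<le> (h::real)\<^sup>2"
  using pwB[of "t - x" h] by (simp add: algebra_simps)

lemma lossL_neg: "lossL k2 k1 (- y) = lossL k1 k2 y"
  by (simp add: lossL_def)

lemma lossL_eq: "lossL k1 k2 y = k1 * y + (k1 + k2) * max 0 (- y)"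
  by (simp add: lossL_def algebra_simps)

lemma lossL_sq: "(lossL k1 k2 (z + c))\<^sup>2 = k1\<^sup>2 * z\<^sup>2 + 2 * k1\<^sup>2 * c * z + k1\<^sup>2 * c\<^sup>2
   + ((k1 + k2)\<^sup>2 - 2 * k1 * (k1 + k2)) * (max 0 (- c - z))\<^sup>2"
proof (cases "z + c \<ge> 0")
  case True
  then have l: "lossL k1 k2 (z + c) = k1 * (z + c)" and m: "max 0 (- c - z) = 0" by (auto simp: lossL_def)
  show ?thesis unfolding l m by (simp add: power2_eq_square algebra_simps)
next
  case False
  then have l: "lossL k1 k2 (z + c) = - k2 * (z + c)" and m: "max 0 (- c - z) = - c - z" by (auto simp: lossL_def)
  show ?thesis unfolding l m by (simp add: power2_eq_square algebra_simps)
qed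

lemma deriv_from_bound:
  fixes g :: "real \<Rightarrow> real"
  assumes b: "\<And>h. \<bar>g (t + h) - g t - h * D\<bar> \<le> B * h\<^sup>2"
  shows "(g has_real_derivative D) (at t)"
  unfolding DERIV_def LIM_eq
proof (intro allI impI)
  fix r :: real assume r: "r > 0"
  have B: "B \<ge> 0" using b[of 1] by simp
  show "\<exists>s>0. \<forall>h. h \<noteq> 0 \<and> norm (h - 0) < s \<longrightarrow> norm ((g (t + h) - g t) / h - D) < r"
  proof (intro exI[of _ "r / (B + 1)"] conjI allI impI)
    show "r / (B + 1) > 0" using r B by simp
    fix h :: real assume h: "h \<noteq> 0 \<and> norm (h - 0) < r / (B + 1)"
    have "(g (t + h) - g t) / h - D = (g (t + h) - g t - h * D) / h" using h by (simp add: field_simps)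
    then have "\<bar>(g (t + h) - g t) / h - D\<bar> = \<bar>g (t + h) - g t - h * D\<bar> / \<bar>h\<bar>" by simp
    also have "\<dots> \<le> B * h\<^sup>2 / \<bar>h\<bar>" using h by (intro divide_right_mono b) auto
    also have "\<dots> = B * \<bar>h\<bar>"
    proof -
      have "B * h\<^sup>2 / \<bar>h\<bar> = B * (\<bar>h\<bar> * \<bar>h\<bar>) / \<bar>h\<bar>" by (simp add: power2_eq_square)
      also have "\<dots> = B * \<bar>h\<bar>" using h by (simp add: field_simps del: abs_mult_self_eq)
      finally show ?thesis .
    qed
    also have "\<dots> \<le> B * (r / (B + 1))" using h B by (intro mult_left_mono) auto
    also have "\<dots> < r" using r B by (simp add: field_simps)
    finally show "norm ((g (t + h) - g t) / h - D) < r" by simp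
  qed
qed

locale symsetting = prob_space M for M :: "'a measure" +
  fixes Z :: "'a \<Rightarrow> real" and f :: "real \<Rightarrow> real"
  assumes f_nn: "\<And>x. f x \<ge> 0"
    and dist: "distributed M lborel Z (\<lambda>x. ennreal (f x))"
    and f_sym: "\<And>x. f x = f (- x)"
    and f_mono: "\<And>x y. 0 \<le> x \<Longrightarrow> x \<le> y \<Longrightarrow> f x \<ge> f y"
    and Z_sq: "integrable M (\<lambda>\<omega>. (Z \<omega>)\<^sup>2)"
begin

lemma Z_meas[measurable]: "Z \<in> borel_measurable M"
  using dist by (simp add: distributed_def)

lemma f_meas[measurable]: "f \<in> borel_measurable borel"
proof -
  have "(\<lambda>x. ennreal (f x)) \<in> borel_measurable borel" using dist by (simp add: distributed_def)
  then have "(\<lambda>x. enn2real (ennreal (f x))) \<in> borel_measurable borel" by simp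
  then show ?thesis using f_nn by simp
qed

lemma f_abs: "f x = f \<bar>x\<bar>"
  by (cases "x \<ge> 0") (auto simp: f_sym[of x])

lemma f_le0: "f x \<le> f 0"
  using f_mono[of 0 "\<bar>x\<bar>"] f_abs[of x] by simp

lemma f_absmono: "\<bar>x\<bar> \<le> \<bar>y\<bar> \<Longrightarrow> f y \<le> f x"
  using f_mono[of "\<bar>x\<bar>" "\<bar>y\<bar>"] f_abs[of x] f_abs[of y] by simp

lemma neg_dist: "distributed M lborel (\<lambda>\<omega>. - Z \<omega>) (\<lambda>x. ennreal (f x))"
proof -
  have "distributed M lborel (\<lambda>\<omega>. 0 + (-1) * Z \<omega>) (\<lambda>x. ennreal (f ((x - 0) / (-1))) / ennreal \<bar>-1\<bar>)"
    using distributed_affine[OF dist, of "-1" 0] by simp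
  moreover have "\<And>x::ennreal. x / 1 = x" by (simp add: divide_ennreal_def)
  ultimately show ?thesis by (simp add: f_sym[symmetric])
qed

lemma neg_setting: "symsetting M (\<lambda>\<omega>. - Z \<omega>) f"
proof unfold_locales
  show "integrable M (\<lambda>\<omega>. (- Z \<omega>)\<^sup>2)" using Z_sq by simp
qed (fact f_nn neg_dist f_sym f_mono)+

lemma E_lborel: fixes g :: "real \<Rightarrow> real" shows "g \<in> borel_measurable borel \<Longrightarrow> expectation (\<lambda>\<omega>. g (Z \<omega>)) = (\<integral>x. f x * g x \<partial>lborel)"
  using distributed_integral[OF dist, of g] f_nn by simp

lemma E_neg: fixes g :: "real \<Rightarrow> real" shows "g \<in> borel_measurable borel \<Longrightarrow> expectation (\<lambda>\<omega>. g (- Z \<omega>)) = expectation (\<lambda>\<omega>. g (Z \<omega>))"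
  using distributed_integral[OF neg_dist, of g] distributed_integral[OF dist, of g] f_nn by simp

lemma int_lborel: fixes g :: "real \<Rightarrow> real" shows "g \<in> borel_measurable borel \<Longrightarrow> integrable M (\<lambda>\<omega>. g (Z \<omega>)) \<Longrightarrow> integrable lborel (\<lambda>x. f x * g x)"
  using distributed_integrable[OF dist, of g] f_nn by simp

lemma int_bounded: fixes g :: "real \<Rightarrow> real" shows "g \<in> borel_measurable borel \<Longrightarrow> (\<And>x. \<bar>g x\<bar> \<le> B) \<Longrightarrow> integrable M (\<lambda>\<omega>. g (Z \<omega>))"
  by (rule integrable_const_bound[where B=B]) auto

lemma int_poly: fixes g :: "real \<Rightarrow> real" shows "g \<in> borel_measurable borel \<Longrightarrow> (\<And>x. \<bar>g x\<bar> \<le> A + B * x\<^sup>2) \<Longrightarrow> integrable M (\<lambda>\<omega>. g (Z \<omega>))"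
  by (rule Bochner_Integration.integrable_bound[where f="\<lambda>\<omega>. A + B * (Z \<omega>)\<^sup>2"])
     (use Z_sq in \<open>auto intro!: AE_I2 order.trans[OF _ abs_ge_self]\<close>)

definition "Fc t = expectation (\<lambda>\<omega>. indicator {..t} (Z \<omega>) :: real)"
definition "Pp t = expectation (\<lambda>\<omega>. max 0 (t - Z \<omega>))"
definition "Qq t = expectation (\<lambda>\<omega>. (max 0 (t - Z \<omega>))\<^sup>2)"

lemma int_ind[intro]: "A \<in> sets borel \<Longrightarrow> integrable M (\<lambda>\<omega>. indicator A (Z \<omega>) :: real)"
  by (rule int_bounded[where B=1]) (auto simp: indicator_def)

lemma int_Z[intro]: "integrable M Z"
  using int_poly[of "\<lambda>x. x" 1 1] abs_le_sq by simp

lemma int_P[intro]: "integrable M (\<lambda>\<omega>. max 0 (t - Z \<omega>))"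
proof -
  have b: "\<bar>max 0 (t - x)\<bar> \<le> (2 + t\<^sup>2) + 1 * x\<^sup>2" for x
  proof -
  have "\<bar>t\<bar> \<le> 1 + t\<^sup>2" "\<bar>x\<bar> \<le> 1 + x\<^sup>2"
    by (rule abs_le_sq)+
  then show ?thesis by auto
  qed
  show ?thesis by (rule int_poly[OF _ b]) simp
qed

lemma int_Q[intro]: "integrable M (\<lambda>\<omega>. (max 0 (t - Z \<omega>))\<^sup>2)"
proof -
  have b: "\<bar>(max 0 (t - x))\<^sup>2\<bar> \<le> (2 * t\<^sup>2) + 2 * x\<^sup>2" for x
  proof -
  have "(max 0 (t - x))\<^sup>2 \<le> (t - x)\<^sup>2" by (simp add: max_def power2_eq_square)
  also have "\<dots> \<le> 2 * t\<^sup>2 + 2 * x\<^sup>2" using zero_le_power2[of "t + x"] by (simp add: power2_diff power2_sum)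
  finally show ?thesis by simp
  qed
  show ?thesis by (rule int_poly[OF _ b]) simp
qed

lemma EZ: "expectation Z = 0"
  using E_neg[of "\<lambda>x. x"] by simp

lemma lint_ind: fixes a b c :: real shows "a \<le> b \<Longrightarrow> integrable lborel (\<lambda>x. c * indicator {a..b} x :: real)"
  by (intro integrable_mult_right integrable_real_indicator) auto

lemma lint_ind_val: fixes a b c :: real shows "a \<le> b \<Longrightarrow> (\<integral>x. c * indicator {a..b} x \<partial>lborel) = c * (b - a)"
  by (simp add: measure_def)

lemma lint_ind': fixes a b c :: real shows "a \<le> b \<Longrightarrow> integrable lborel (\<lambda>x. c * indicator {a<..<b} x :: real)"
  by (intro integrable_mult_right integrable_real_indicator) auto

lemma lint_ind_val': fixes a b c :: real shows "a \<le> b \<Longrightarrow> (\<integral>x. c * indicator {a<..<b} x \<partial>lborel) = c * (b - a)"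
  by (simp add: measure_def)

lemma F_interval: "a \<le> b \<Longrightarrow> expectation (\<lambda>\<omega>. indicator {a..b} (Z \<omega>)) \<le> f 0 * (b - a)"
proof -
  assume ab: "a \<le> b"
  have "expectation (\<lambda>\<omega>. indicator {a..b} (Z \<omega>)) = (\<integral>x. f x * indicator {a..b} x \<partial>lborel)"
    by (rule E_lborel) simp
  also have "\<dots> \<le> (\<integral>x. f 0 * indicator {a..b} x \<partial>lborel)"
    by (intro integral_mono int_lborel int_ind lint_ind ab) (auto simp: indicator_def f_le0)
  also have "\<dots> = f 0 * (b - a)" using ab by (rule lint_ind_val)
  finally show ?thesis .
qed

lemma F_lower: "a \<le> b \<Longrightarrow> (\<And>x. a < x \<Longrightarrow> x < b \<Longrightarrow> c \<le> f x) \<Longrightarrow>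
   c * (b - a) \<le> expectation (\<lambda>\<omega>. indicator {a<..<b} (Z \<omega>))"
proof -
  assume ab: "a \<le> b" and c: "\<And>x. a < x \<Longrightarrow> x < b \<Longrightarrow> c \<le> f x"
  have "c * (b - a) = (\<integral>x. c * indicator {a<..<b} x \<partial>lborel)" using ab by (simp add: lint_ind_val')
  also have "\<dots> \<le> (\<integral>x. f x * indicator {a<..<b} x \<partial>lborel)"
    by (intro integral_mono int_lborel int_ind lint_ind' ab) (auto simp: indicator_def c)
  also have "\<dots> = expectation (\<lambda>\<omega>. indicator {a<..<b} (Z \<omega>))"
    by (rule E_lborel[symmetric]) simp
  finally show ?thesis .
qed

lemma F_split: "t < 0 \<Longrightarrow> 1 - 2 * Fc t = expectation (\<lambda>\<omega>. indicator {t<..<-t} (Z \<omega>))"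
proof -
  assume t: "t < 0"
  have pw: "indicator {..t} x + indicator {t<..<-t} x + indicator {..t} (- x) = (1::real)" for x
    using t by (auto simp: indicator_def)
  have "1 = expectation (\<lambda>\<omega>. indicator {..t} (Z \<omega>) + indicator {t<..<-t} (Z \<omega>) + indicator {..t} (- Z \<omega>) :: real)"
    by (simp add: pw prob_space)
  also have "\<dots> = Fc t + expectation (\<lambda>\<omega>. indicator {t<..<-t} (Z \<omega>)) + expectation (\<lambda>\<omega>. indicator {..t} (- Z \<omega>) :: real)"
  proof -
    have i3: "integrable M (\<lambda>\<omega>. indicator {..t} (- Z \<omega>) :: real)"
      by (rule int_bounded[where B=1, of "\<lambda>x. indicator {..t} (-x)", simplified]; auto simp: indicator_def)
    have i1: "integrable M (\<lambda>\<omega>. indicator {..t} (Z \<omega>) :: real)" by auto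
    have i2: "integrable M (\<lambda>\<omega>. indicator {t<..<-t} (Z \<omega>) :: real)" by auto
    show ?thesis unfolding Fc_def
      by (simp add: Bochner_Integration.integral_add i1 i2 i3)
  qed
  also have "expectation (\<lambda>\<omega>. indicator {..t} (- Z \<omega>) :: real) = Fc t"
    unfolding Fc_def by (rule E_neg) simp
  finally show ?thesis by simp
qed

lemma F_D4: "t < 0 \<Longrightarrow> - 2 * t * f t \<le> 1 - 2 * Fc t"
proof -
  assume t: "t < 0"
  have "f t * (- t - t) \<le> expectation (\<lambda>\<omega>. indicator {t<..<-t} (Z \<omega>))"
    by (rule F_lower) (use t in \<open>auto intro!: f_absmono\<close>)
  then show ?thesis using F_split[OF t] by (simp add: algebra_simps)
qed

lemma Fc_half: "Fc 0 = 1/2"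
proof -
  have pw: "indicator {..0} x + indicator {..0} (- x) = (1::real) + indicator {0..0} x" for x :: real
    by (auto simp: indicator_def)
  have i2: "integrable M (\<lambda>\<omega>. indicator {..0} (- Z \<omega>) :: real)"
    by (rule int_bounded[where B=1, of "\<lambda>x. indicator {..0} (-x)", simplified]; auto simp: indicator_def)
  have "expectation (\<lambda>\<omega>. indicator {..0} (Z \<omega>) + indicator {..0} (- Z \<omega>) :: real)
     = expectation (\<lambda>\<omega>. 1 + indicator {0..0} (Z \<omega>) :: real)"
    by (simp only: pw)
  also have "\<dots> = 1 + expectation (\<lambda>\<omega>. indicator {0..0} (Z \<omega>) :: real)"
    by (subst Bochner_Integration.integral_add; auto simp: prob_space)
  finally have e: "Fc 0 + Fc 0 = 1 + expectation (\<lambda>\<omega>. indicator {0..0} (Z \<omega>) :: real)"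
    unfolding Fc_def using i2 E_neg[of "indicator {..0}"] by (subst (asm) Bochner_Integration.integral_add) auto
  have "expectation (\<lambda>\<omega>. indicator {0..0} (Z \<omega>) :: real) \<le> 0"
    using F_interval[of 0 0] by simp
  moreover have "0 \<le> expectation (\<lambda>\<omega>. indicator {0..0} (Z \<omega>) :: real)"
    by (rule integral_nonneg_AE) auto
  ultimately show ?thesis using e by linarith
qed

lemma Fc_diff: "s \<le> t \<Longrightarrow> Fc t - Fc s = expectation (\<lambda>\<omega>. indicator {s<..t} (Z \<omega>))"
proof -
  assume st: "s \<le> t"
  have pw: "indicator {..t} x = indicator {..s} x + (indicator {s<..t} x :: real)" for x
    using st by (auto simp: indicator_def)
  show ?thesis unfolding Fc_def pw by (subst Bochner_Integration.integral_add) auto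
qed

lemma Fc_nonneg: "0 \<le> Fc t"
  unfolding Fc_def by (rule integral_nonneg_AE) auto

lemma Fc_mono: "s \<le> t \<Longrightarrow> Fc s \<le> Fc t"
proof -
  assume st: "s \<le> t"
  have "0 \<le> expectation (\<lambda>\<omega>. indicator {s<..t} (Z \<omega>) :: real)"
    by (rule integral_nonneg_AE) auto
  then show ?thesis using Fc_diff[OF st] by linarith
qed

lemma Fc_strict: "s \<le> t \<Longrightarrow> (\<And>x. s < x \<Longrightarrow> x < t \<Longrightarrow> c \<le> f x) \<Longrightarrow> c * (t - s) \<le> Fc t - Fc s"
proof -
  assume st: "s \<le> t" and c: "\<And>x. s < x \<Longrightarrow> x < t \<Longrightarrow> c \<le> f x"
  have "c * (t - s) \<le> expectation (\<lambda>\<omega>. indicator {s<..<t} (Z \<omega>))"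
    by (rule F_lower[OF st c])
  also have "\<dots> \<le> expectation (\<lambda>\<omega>. indicator {s<..t} (Z \<omega>))"
    by (intro integral_mono int_ind) (auto simp: indicator_def)
  finally show ?thesis using Fc_diff[OF st] by simp
qed

lemma D5: "t \<le> 0 \<Longrightarrow> (Fc t)\<^sup>2 \<le> 2 * f t * Pp t"
proof -
  assume t: "t \<le> 0"
  have FL: "Fc t = (\<integral>x. f x * indicator {..t} x \<partial>lborel)"
    unfolding Fc_def by (rule E_lborel) simp
  have PL: "Pp t = (\<integral>x. f x * max 0 (t - x) \<partial>lborel)"
    unfolding Pp_def by (rule E_lborel) simp
  have iF: "integrable lborel (\<lambda>x. f x * indicator {..t} x)"
    by (rule int_lborel) auto
  have iP: "integrable lborel (\<lambda>x. f x * max 0 (t - x))"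
    by (rule int_lborel) auto
  have fle: "x \<le> t \<Longrightarrow> f x \<le> f t" for x using t by (intro f_absmono) auto
  have P0: "0 \<le> Pp t" unfolding Pp_def by (rule integral_nonneg_AE) auto
  show ?thesis
  proof (cases "f t = 0")
    case True
    have "Fc t = (\<integral>x. 0 \<partial>(lborel::real measure))" unfolding FL
    proof (rule Bochner_Integration.integral_cong)
      fix x :: real
      show "f x * indicator {..t} x = 0"
      proof (cases "x \<le> t")
        case True
        then show ?thesis using fle[OF True] \<open>f t = 0\<close> f_nn[of x] by simp
      qed simp
    qed simp
    then have "Fc t = 0" by simp
    then show ?thesis using True by simp
  next
    case False
    define m where "m = f t"
    have m: "m > 0" using False f_nn[of t] by (simp add: m_def)
    define d where "d = Fc t / m"
    have d: "d \<ge> 0" using m Fc_nonneg[of t] by (simp add: d_def)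
    have pw: "d * (f x * indicator {..t} x) - m * ((x - (t - d)) * indicator {t - d..t} x) \<le> f x * max 0 (t - x)" for x
    proof (cases "x \<le> t")
      case xt: True
      have fx: "f x \<le> m" "0 \<le> f x" using fle[OF xt] f_nn[of x] by (auto simp: m_def)
      show ?thesis
      proof (cases "x < t - d")
        case True
        then have "f x * d \<le> f x * (t - x)" using fx by (intro mult_left_mono) auto
        then show ?thesis using True xt by (simp add: indicator_def mult.commute)
      next
        case False
        have "(m - f x) * (d - (t - x)) \<ge> 0" using fx xt False by (intro mult_nonneg_nonneg) auto
        then show ?thesis using False xt by (simp add: indicator_def algebra_simps)
      qed
    next
      case False
      then show ?thesis by (simp add: indicator_def)
    qed
    have "d * Fc t - m * ((t - (t - d))\<^sup>2 / 2) = (\<integral>x. d * (f x * indicator {..t} x) - m * ((x - (t - d)) * indicator {t - d..t} x) \<partial>lborel)"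
      using d by (simp add: FL tri_int iF tri_integrable)
    also have "\<dots> \<le> Pp t" unfolding PL
      by (intro integral_mono iP pw Bochner_Integration.integrable_diff integrable_mult_right iF tri_integrable)
    finally have "d * Fc t - m * d\<^sup>2 / 2 \<le> Pp t" by simp
    then have "(Fc t)\<^sup>2 / m - (Fc t)\<^sup>2 / (2 * m) \<le> Pp t" using m by (simp add: d_def power2_eq_square)
    then have "(Fc t)\<^sup>2 / (2 * m) \<le> Pp t" by (simp add: field_simps)
    then show ?thesis using m by (simp add: m_def field_simps)
  qed
qed

lemma P_bound: "\<bar>Pp (t + h) - Pp t - h * Fc t\<bar> \<le> 2 * f 0 * h\<^sup>2"
proof -
  let ?g = "\<lambda>\<omega>. max 0 (t + h - Z \<omega>) - max 0 (t - Z \<omega>) - h * indicator {..t} (Z \<omega>)"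
  have "Pp (t + h) - Pp t - h * Fc t = expectation ?g"
    unfolding Pp_def Fc_def by (simp add: Bochner_Integration.integral_diff int_P int_ind)
  then have "\<bar>Pp (t + h) - Pp t - h * Fc t\<bar> \<le> expectation (\<lambda>\<omega>. \<bar>?g \<omega>\<bar>)"
    using integral_norm_bound[of M ?g] by simp
  also have "\<dots> \<le> expectation (\<lambda>\<omega>. \<bar>h\<bar> * indicator {t - \<bar>h\<bar>..t + \<bar>h\<bar>} (Z \<omega>))"
    by (intro integral_mono pwA integrable_mult_right int_ind Bochner_Integration.integrable_abs
        Bochner_Integration.integrable_diff int_P) auto
  also have "\<dots> = \<bar>h\<bar> * expectation (\<lambda>\<omega>. indicator {t - \<bar>h\<bar>..t + \<bar>h\<bar>} (Z \<omega>))" by simp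
  also have "\<dots> \<le> \<bar>h\<bar> * (f 0 * (t + \<bar>h\<bar> - (t - \<bar>h\<bar>)))"
    by (intro mult_left_mono F_interval) auto
  also have "\<dots> = 2 * f 0 * (\<bar>h\<bar> * \<bar>h\<bar>)" by (simp add: algebra_simps)
  also have "\<dots> = 2 * f 0 * h\<^sup>2" by (simp add: power2_eq_square)
  finally show ?thesis .
qed

lemma Q_bound: "\<bar>Qq (t + h) - Qq t - 2 * h * Pp t\<bar> \<le> 1 * h\<^sup>2"
proof -
  let ?g = "\<lambda>\<omega>. (max 0 (t + h - Z \<omega>))\<^sup>2 - (max 0 (t - Z \<omega>))\<^sup>2 - 2 * h * max 0 (t - Z \<omega>)"
  have "Qq (t + h) - Qq t - 2 * h * Pp t = expectation ?g"
    unfolding Qq_def Pp_def by (simp add: Bochner_Integration.integral_diff int_P int_Q)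
  then have "\<bar>Qq (t + h) - Qq t - 2 * h * Pp t\<bar> \<le> expectation (\<lambda>\<omega>. \<bar>?g \<omega>\<bar>)"
    using integral_norm_bound[of M ?g] by simp
  also have "\<dots> \<le> expectation (\<lambda>\<omega>. h\<^sup>2)"
    by (intro integral_mono pwB' Bochner_Integration.integrable_abs
        Bochner_Integration.integrable_diff int_P int_Q integrable_mult_right) auto
  also have "\<dots> = 1 * h\<^sup>2" by (simp add: prob_space)
  finally show ?thesis .
qed

lemma P_deriv: "(Pp has_real_derivative Fc t) (at t)"
  by (rule deriv_from_bound[OF P_bound])

lemma Q_deriv: "(Qq has_real_derivative 2 * Pp t) (at t)"
  by (rule deriv_from_bound[where B=1]) (use Q_bound[of t] in \<open>simp add: algebra_simps\<close>)

definition "sig2 = expectation (\<lambda>\<omega>. (Z \<omega>)\<^sup>2)"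

lemma EL: "expectation (\<lambda>\<omega>. lossL k1 k2 (Z \<omega> + c)) = k1 * c + (k1 + k2) * Pp (- c)"
proof -
  have "expectation (\<lambda>\<omega>. lossL k1 k2 (Z \<omega> + c)) = expectation (\<lambda>\<omega>. k1 * Z \<omega> + k1 * c + (k1 + k2) * max 0 (- c - Z \<omega>))"
    by (simp add: lossL_eq algebra_simps)
  also have "\<dots> = k1 * expectation Z + k1 * c + (k1 + k2) * Pp (- c)"
    unfolding Pp_def using int_Z int_P[of "-c"] by (simp add: prob_space)
  finally show ?thesis using EZ by simp
qed

lemma int_L: "integrable M (\<lambda>\<omega>. lossL k1 k2 (Z \<omega> + c))"
proof -
  have "integrable M (\<lambda>\<omega>. k1 * Z \<omega> + k1 * c + (k1 + k2) * max 0 (- c - Z \<omega>))"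
    using int_Z int_P[of "-c"] by simp
  then show ?thesis by (simp add: lossL_eq algebra_simps)
qed

lemma EL2: "expectation (\<lambda>\<omega>. (lossL k1 k2 (Z \<omega> + c))\<^sup>2) = k1\<^sup>2 * sig2 + k1\<^sup>2 * c\<^sup>2
    + ((k1 + k2)\<^sup>2 - 2 * k1 * (k1 + k2)) * Qq (- c)"
  and int_L2: "integrable M (\<lambda>\<omega>. (lossL k1 k2 (Z \<omega> + c))\<^sup>2)"
proof -
  have i: "integrable M (\<lambda>\<omega>. k1\<^sup>2 * (Z \<omega>)\<^sup>2 + 2 * k1\<^sup>2 * c * Z \<omega> + k1\<^sup>2 * c\<^sup>2
   + ((k1 + k2)\<^sup>2 - 2 * k1 * (k1 + k2)) * (max 0 (- c - Z \<omega>))\<^sup>2)"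
    using int_Z int_Q[of "-c"] Z_sq by simp
  then show "integrable M (\<lambda>\<omega>. (lossL k1 k2 (Z \<omega> + c))\<^sup>2)" by (simp only: lossL_sq)
  have "expectation (\<lambda>\<omega>. (lossL k1 k2 (Z \<omega> + c))\<^sup>2) = expectation (\<lambda>\<omega>. k1\<^sup>2 * (Z \<omega>)\<^sup>2 + 2 * k1\<^sup>2 * c * Z \<omega> + k1\<^sup>2 * c\<^sup>2
   + ((k1 + k2)\<^sup>2 - 2 * k1 * (k1 + k2)) * (max 0 (- c - Z \<omega>))\<^sup>2)"
    by (simp only: lossL_sq)
  also have "\<dots> = k1\<^sup>2 * sig2 + 2 * k1\<^sup>2 * c * expectation Z + k1\<^sup>2 * c\<^sup>2
    + ((k1 + k2)\<^sup>2 - 2 * k1 * (k1 + k2)) * Qq (- c)"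
    unfolding sig2_def Qq_def using int_Z int_Q[of "-c"] Z_sq by (simp add: prob_space)
  finally show "expectation (\<lambda>\<omega>. (lossL k1 k2 (Z \<omega> + c))\<^sup>2) = k1\<^sup>2 * sig2 + k1\<^sup>2 * c\<^sup>2
    + ((k1 + k2)\<^sup>2 - 2 * k1 * (k1 + k2)) * Qq (- c)" using EZ by simp
qed

definition "psi k1 k2 t = ((k1 + k2)\<^sup>2 - 2 * k1 * (k1 + k2)) * Qq t - (k1 + k2)\<^sup>2 * (Pp t)\<^sup>2
   + 2 * k1 * (k1 + k2) * t * Pp t"

lemma VL: "variance (\<lambda>\<omega>. lossL k1 k2 (Z \<omega> + c)) = k1\<^sup>2 * sig2 + psi k1 k2 (- c)"
  by (subst variance_eq[OF int_L int_L2]) (simp only: EL EL2 psi_def; simp add: power2_eq_square algebra_simps)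

lemma psi_deriv: "(psi k1 k2 has_real_derivative
   2 * (k1 + k2) * ((k1 + k2) * ((1 - 2 * Fc t) * Pp t + (Fc t)\<^sup>2 * t)
     + ((k1 + k2) * Fc t - k1) * (Pp t - t * Fc t))) (at t)"
proof -
  have e: "psi k1 k2 = (\<lambda>x. ((k1 + k2)\<^sup>2 - 2 * k1 * (k1 + k2)) * Qq x - (k1 + k2)\<^sup>2 * (Pp x * Pp x)
     + (2 * k1 * (k1 + k2)) * (x * Pp x))"
    by (auto simp: psi_def[abs_def] power2_eq_square algebra_simps)
  have d1: "((\<lambda>x. Pp x * Pp x) has_real_derivative Fc t * Pp t + Fc t * Pp t) (at t)"
    by (rule DERIV_mult[OF P_deriv P_deriv])
  have d2: "((\<lambda>x. x * Pp x) has_real_derivative 1 * Pp t + Fc t * t) (at t)"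
    by (rule DERIV_mult[OF DERIV_ident P_deriv])
  have "(psi k1 k2 has_real_derivative
     ((k1 + k2)\<^sup>2 - 2 * k1 * (k1 + k2)) * (2 * Pp t) - (k1 + k2)\<^sup>2 * (Fc t * Pp t + Fc t * Pp t)
     + (2 * k1 * (k1 + k2)) * (1 * Pp t + Fc t * t)) (at t)"
    unfolding e by (intro DERIV_add DERIV_diff DERIV_cmult d1 d2 Q_deriv)
  then show ?thesis by (rule DERIV_cong) (simp add: power2_eq_square algebra_simps)
qed

lemma FOC:
  assumes k: "k1 > 0" "k2 > 0"
    and min: "\<And>c. expectation (\<lambda>\<omega>. lossL k1 k2 (Z \<omega> + C)) \<le> expectation (\<lambda>\<omega>. lossL k1 k2 (Z \<omega> + c))"
  shows "Fc (- C) = k1 / (k1 + k2)"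
proof -
  define m where "m c = k1 * c + (k1 + k2) * Pp (- c)" for c
  have mE: "m c = expectation (\<lambda>\<omega>. lossL k1 k2 (Z \<omega> + c))" for c by (simp add: m_def EL)
  have b: "\<bar>m (C + h) - m C - h * (k1 - (k1 + k2) * Fc (- C))\<bar> \<le> ((k1 + k2) * (2 * f 0)) * h\<^sup>2" for h
  proof -
    have "m (C + h) - m C - h * (k1 - (k1 + k2) * Fc (- C)) = (k1 + k2) * (Pp (- C + - h) - Pp (- C) - (- h) * Fc (- C))"
      by (simp add: m_def algebra_simps)
    then have "\<bar>m (C + h) - m C - h * (k1 - (k1 + k2) * Fc (- C))\<bar> = (k1 + k2) * \<bar>Pp (- C + - h) - Pp (- C) - (- h) * Fc (- C)\<bar>"
      using k by (simp add: abs_mult)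
    also have "\<dots> \<le> (k1 + k2) * (2 * f 0 * (- h)\<^sup>2)"
      using k by (intro mult_left_mono P_bound) auto
    finally show ?thesis by (simp add: algebra_simps)
  qed
  have "(m has_real_derivative (k1 - (k1 + k2) * Fc (- C))) (at C)"
    by (rule deriv_from_bound[OF b])
  moreover have "\<forall>y. \<bar>C - y\<bar> < 1 \<longrightarrow> m C \<le> m y" using min by (simp add: mE)
  ultimately have "k1 - (k1 + k2) * Fc (- C) = 0"
    using DERIV_local_min[where f=m and x=C and l="k1 - (k1 + k2) * Fc (- C)" and d=1] by simp
  then show ?thesis using k by (simp add: field_simps)
qed

lemma main_eq:
  assumes k: "k1 > 0" "k2 = k1"
    and min: "\<And>c. expectation (\<lambda>\<omega>. lossL k1 k2 (Z \<omega> + C)) \<le> expectation (\<lambda>\<omega>. lossL k1 k2 (Z \<omega> + c))"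
  shows "C \<le> 0"
proof (rule ccontr)
  assume "\<not> C \<le> 0"
  then have t: "- C < 0" by simp
  have F: "Fc (- C) = 1 / 2" using FOC[OF _ _ min] k by simp
  have "- 2 * (- C) * f (- C) \<le> 0" using F_D4[OF t] F by simp
  then have "f (- C) \<le> 0" using t by (simp add: mult_le_0_iff)
  then have "f (- C) = 0" using f_nn[of "- C"] by simp
  then show False using D5[of "- C"] t F by simp
qed

lemma main_lt:
  assumes k: "k1 > 0" "k2 > k1"
    and min: "\<And>c. expectation (\<lambda>\<omega>. lossL k1 k2 (Z \<omega> + C)) \<le> expectation (\<lambda>\<omega>. lossL k1 k2 (Z \<omega> + c))"
  shows "C > 0 \<and> variance (\<lambda>\<omega>. lossL k1 k2 (Z \<omega> + C)) < variance (\<lambda>\<omega>. lossL k1 k2 (Z \<omega> + 0))"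
proof -
  define K where "K = k1 + k2"
  define \<alpha> where "\<alpha> = k1 / K"
  define \<tau> where "\<tau> = - C"
  have K: "K > 0" using k by (simp add: K_def)
  have a0: "\<alpha> > 0" using k K by (simp add: \<alpha>_def)
  have ahalf: "\<alpha> < 1/2" using k by (simp add: \<alpha>_def K_def field_simps)
  have F\<tau>: "Fc \<tau> = \<alpha>" using FOC[OF _ _ min] k by (simp add: \<tau>_def \<alpha>_def K_def)
  have \<tau>: "\<tau> < 0"
  proof (rule ccontr)
    assume "\<not> \<tau> < 0"
    then have "Fc 0 \<le> Fc \<tau>" by (intro Fc_mono) auto
    then show False using Fc_half F\<tau> ahalf by simp
  qed
  have "\<alpha>\<^sup>2 \<le> 2 * f \<tau> * Pp \<tau>" using D5[of \<tau>] \<tau> F\<tau> by simp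
  moreover have "\<alpha>\<^sup>2 > 0" using a0 by simp
  ultimately have "f \<tau> \<noteq> 0" by auto
  then have ft: "f \<tau> > 0" using f_nn[of \<tau>] by simp
  obtain z where z: "\<tau> < z" "z < 0" and mvt: "psi k1 k2 0 - psi k1 k2 \<tau> = (0 - \<tau>) *
     (2 * (k1 + k2) * ((k1 + k2) * ((1 - 2 * Fc z) * Pp z + (Fc z)\<^sup>2 * z)
     + ((k1 + k2) * Fc z - k1) * (Pp z - z * Fc z)))"
    using MVT2[OF \<tau>, of "psi k1 k2", OF psi_deriv] by blast
  define F where "F = Fc z"
  define P where "P = Pp z"
  have "f \<tau> * (z - \<tau>) \<le> Fc z - Fc \<tau>"
    by (rule Fc_strict) (use z \<tau> in \<open>auto intro!: f_absmono\<close>)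
  moreover have "f \<tau> * (z - \<tau>) > 0" using ft z by simp
  ultimately have Fa: "F > \<alpha>" using F\<tau> by (simp add: F_def)
  have D4z: "- 2 * z * f z \<le> 1 - 2 * F" using F_D4[of z] z by (simp add: F_def)
  have D5z: "F\<^sup>2 \<le> 2 * f z * P" using D5[of z] z by (simp add: F_def P_def)
  have P0: "P \<ge> 0" unfolding P_def Pp_def by (rule integral_nonneg_AE) auto
  have fz: "f z \<ge> 0" by (rule f_nn)
  have Ppos: "P > 0"
  proof (rule ccontr)
    assume "\<not> P > 0"
    then have "P = 0" using P0 by simp
    then have "F\<^sup>2 \<le> 0" using D5z by simp
    moreover have "F\<^sup>2 > 0" using Fa a0 by simp
    ultimately show False by simp
  qed
  have key: "(1 - 2 * F) * P + F\<^sup>2 * z \<ge> 0"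
  proof -
    have "(- 2 * z * f z) * P \<le> (1 - 2 * F) * P" by (rule mult_right_mono[OF D4z P0])
    moreover have "(- z) * F\<^sup>2 \<le> (- z) * (2 * f z * P)" using z by (intro mult_left_mono D5z) auto
    ultimately show ?thesis by (simp add: algebra_simps)
  qed
  have second: "((k1 + k2) * F - k1) * (P - z * F) > 0"
  proof (rule mult_pos_pos)
    show "(k1 + k2) * F - k1 > 0" using Fa K by (simp add: \<alpha>_def K_def field_simps)
    have "z * F < 0" using z Fa a0 by (simp add: mult_neg_pos)
    then show "P - z * F > 0" using Ppos by simp
  qed
  have "(k1 + k2) * ((1 - 2 * F) * P + F\<^sup>2 * z) \<ge> 0" using key K by (simp add: K_def)
  then have pos: "2 * (k1 + k2) * ((k1 + k2) * ((1 - 2 * F) * P + F\<^sup>2 * z)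
     + ((k1 + k2) * F - k1) * (P - z * F)) > 0" using second K by (simp add: K_def)
  have "psi k1 k2 0 - psi k1 k2 \<tau> > 0"
    unfolding mvt F_def[symmetric] P_def[symmetric] by (rule mult_pos_pos[OF _ pos]) (use \<tau> in simp)
  then show ?thesis using \<tau> VL[of k1 k2 C] VL[of k1 k2 0] by (simp add: \<tau>_def)
qed

end

theorem theorem1:
  fixes M :: "'a measure" and Z :: "'a \<Rightarrow> real" and f :: "real \<Rightarrow> real"
    and k1 k2 C :: real
  assumes "prob_space M"
    and "k1 > 0" and "k2 > 0"
    and "\<And>x. f x \<ge> 0"
    and "distributed M lborel Z (\<lambda>x. ennreal (f x))"
    and "\<And>x. f x = f (- x)"
    and "\<And>x y. 0 \<le> x \<Longrightarrow> x \<le> y \<Longrightarrow> f x \<ge> f y"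
    and "integrable M (\<lambda>\<omega>. (Z \<omega>)\<^sup>2)"
    and "\<And>c. (\<integral>\<omega>. lossL k1 k2 (Z \<omega> + C) \<partial>M) \<le> (\<integral>\<omega>. lossL k1 k2 (Z \<omega> + c) \<partial>M)"
  shows "prob_space.variance M (\<lambda>\<omega>. lossL k1 k2 (Z \<omega> + C))
           \<le> prob_space.variance M (\<lambda>\<omega>. lossL k1 k2 (Z \<omega>))
       \<and> (prob_space.variance M (\<lambda>\<omega>. lossL k1 k2 (Z \<omega> + C))
           = prob_space.variance M (\<lambda>\<omega>. lossL k1 k2 (Z \<omega>)) \<longrightarrow> C = 0)
       \<and> (C = 0 \<longleftrightarrow> k1 = k2)"
proof -
  interpret S: symsetting M Z f
    by (rule symsetting.intro[OF assms(1) symsetting_axioms.intro[OF assms(4) assms(5) assms(6) assms(7) assms(8)]])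
  interpret N: symsetting M "\<lambda>\<omega>. - Z \<omega>" f by (rule S.neg_setting)
  have k1: "k1 > 0" and k2: "k2 > 0" using assms(2,3) .
  have min: "\<And>c. (\<integral>\<omega>. lossL k1 k2 (Z \<omega> + C) \<partial>M) \<le> (\<integral>\<omega>. lossL k1 k2 (Z \<omega> + c) \<partial>M)"
    by (rule assms(9))
  have sw: "\<And>c. (\<lambda>\<omega>. lossL k2 k1 (- Z \<omega> + c)) = (\<lambda>\<omega>. lossL k1 k2 (Z \<omega> + - c))"
  proof
    fix c \<omega>
    show "lossL k2 k1 (- Z \<omega> + c) = lossL k1 k2 (Z \<omega> + - c)"
      using lossL_neg[of k2 k1 "Z \<omega> + - c"] by simp
  qed
  have minN: "\<And>c. (\<integral>\<omega>. lossL k2 k1 (- Z \<omega> + - C) \<partial>M) \<le> (\<integral>\<omega>. lossL k2 k1 (- Z \<omega> + c) \<partial>M)"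
    unfolding sw using min[of "- c" for c] by simp
  let ?V = "\<lambda>c. prob_space.variance M (\<lambda>\<omega>. lossL k1 k2 (Z \<omega> + c))"
  have V0: "prob_space.variance M (\<lambda>\<omega>. lossL k1 k2 (Z \<omega>)) = ?V 0" by simp
  consider (lt) "k1 < k2" | (eq) "k1 = k2" | (gt) "k2 < k1" by linarith
  then show ?thesis
  proof cases
    case lt
    from S.main_lt[OF k1 lt min] have "C > 0" "?V C < ?V 0" by auto
    then show ?thesis using lt by (simp only: V0) auto
  next
    case gt
    have f1: "(\<lambda>\<omega>. lossL k2 k1 (- Z \<omega> + - C)) = (\<lambda>\<omega>. lossL k1 k2 (Z \<omega> + C))"
      using sw[of "- C"] by simp
    have f2: "(\<lambda>\<omega>. lossL k2 k1 (- Z \<omega> + 0)) = (\<lambda>\<omega>. lossL k1 k2 (Z \<omega> + 0))"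
      using sw[of 0] by simp
    have A: "0 < - C \<and> prob_space.variance M (\<lambda>\<omega>. lossL k2 k1 (- Z \<omega> + - C))
        < prob_space.variance M (\<lambda>\<omega>. lossL k2 k1 (- Z \<omega> + 0))"
      by (rule N.main_lt[OF k2 gt minN])
    have f1p: "\<And>x. lossL k2 k1 (- Z x + - C) = lossL k1 k2 (Z x + C)" using f1 by (rule fun_cong)
    have f2p: "\<And>x. lossL k2 k1 (- Z x + 0) = lossL k1 k2 (Z x + 0)" using f2 by (rule fun_cong)
    have "?V C < ?V 0" using A by (simp only: f1 f2 f1p f2p)
    moreover have "0 < - C" using A by (rule conjunct1)
    ultimately have "0 < - C \<and> ?V C < ?V 0" by blast
    then show ?thesis using gt by (simp only: V0) auto
  next
    case eq
    have "C \<le> 0" using S.main_eq[OF k1 eq[symmetric] min] .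
    moreover have "- C \<le> 0" using N.main_eq[OF k2 eq minN] .
    ultimately have "C = 0" by simp
    then show ?thesis using eq by simp
  qed
qed

end
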